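(* Let $e\ge1$ and let $Q$ be a generic binary quadratic form. Then for every integer $p$ with $0\le p\le e$, the transvectant $(Q^e,Q^e)_{2p}$ is not identically zero.
   Context: For binary forms $A,B$ in $(x_0,x_1)$ of degrees $a,b$ and $k\ge0$, $(A,B)_k=\frac{(a-k)!(b-k)!}{a!\,b!}\bigl[\Omega^kA(x_0,x_1)B(y_0,y_1)\bigr]_{\underline{y}:=\underline{x}}$, where $\Omega=\frac{\partial^2}{\partial x_0\partial y_1}-\frac{\partial^2}{\partial x_1\partial y_0}$. *)

theory Defs
  imports Complex_Main
begin

text \<open>Polynomials are represented by their coefficient maps.
  A polynomial in (x0,x1) is a map  nat \<times> nat \<Rightarrow> complex, the pair (i,j) being the
  exponent of x0^i x1^j; a polynomial in (x0,x1,y0,y1) is a map on exponent quadruples.\<close>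

type_synonym poly2 = "nat \<times> nat \<Rightarrow> complex"
type_synonym poly4 = "nat \<times> nat \<times> nat \<times> nat \<Rightarrow> complex"

definition p2_mult :: "poly2 \<Rightarrow> poly2 \<Rightarrow> poly2" where
  "p2_mult P R = (\<lambda>(i,j). \<Sum>i1\<le>i. \<Sum>j1\<le>j. P (i1,j1) * R (i - i1, j - j1))"

definition p2_one :: poly2 where
  "p2_one = (\<lambda>m. if m = (0,0) then 1 else 0)"

primrec p2_pow :: "poly2 \<Rightarrow> nat \<Rightarrow> poly2" where
  "p2_pow P 0 = p2_one"
| "p2_pow P (Suc n) = p2_mult P (p2_pow P n)"

definition tensor :: "poly2 \<Rightarrow> poly2 \<Rightarrow> poly4" where
  "tensor A B = (\<lambda>(i,j,k,l). A (i,j) * B (k,l))"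

definition dx0 :: "poly4 \<Rightarrow> poly4" where
  "dx0 F = (\<lambda>(i,j,k,l). of_nat (Suc i) * F (Suc i, j, k, l))"
definition dx1 :: "poly4 \<Rightarrow> poly4" where
  "dx1 F = (\<lambda>(i,j,k,l). of_nat (Suc j) * F (i, Suc j, k, l))"
definition dy0 :: "poly4 \<Rightarrow> poly4" where
  "dy0 F = (\<lambda>(i,j,k,l). of_nat (Suc k) * F (i, j, Suc k, l))"
definition dy1 :: "poly4 \<Rightarrow> poly4" where
  "dy1 F = (\<lambda>(i,j,k,l). of_nat (Suc l) * F (i, j, k, Suc l))"

definition Omega :: "poly4 \<Rightarrow> poly4" where
  "Omega F = (\<lambda>m. dx0 (dy1 F) m - dx1 (dy0 F) m)"

text \<open>Substitution y := x.\<close>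
definition diag :: "poly4 \<Rightarrow> poly2" where
  "diag F = (\<lambda>(i,j). \<Sum>i1\<le>i. \<Sum>j1\<le>j. F (i1, j1, i - i1, j - j1))"

definition transvectant :: "nat \<Rightarrow> nat \<Rightarrow> poly2 \<Rightarrow> poly2 \<Rightarrow> nat \<Rightarrow> poly2" where
  "transvectant a b A B k =
     (\<lambda>m. (fact (a - k) * fact (b - k) / (fact a * fact b)) * diag ((Omega ^^ k) (tensor A B)) m)"

definition quad_form :: "complex \<Rightarrow> complex \<Rightarrow> complex \<Rightarrow> poly2" where
  "quad_form a b c = (\<lambda>m. if m = (2,0) then a else if m = (1,1) then b
                          else if m = (0,2) then c else 0)"

end

theory Submission
  imports Defs "HOL-Library.Complex_Order"
begin

lemma cpos_mult_nat: "(0::complex) < x \<Longrightarrow> 0 < of_nat (Suc n) * x"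
  by (auto simp: less_complex_def less_eq_complex_def)

lemma cpos_mult_real: "(0::complex) < x \<Longrightarrow> 0 < r \<Longrightarrow> 0 < complex_of_real r * x"
  by (auto simp: less_complex_def less_eq_complex_def)

lemma cpos_add: "(0::complex) < x \<Longrightarrow> 0 \<le> y \<Longrightarrow> 0 < x + y"
  by (auto simp: less_complex_def less_eq_complex_def)

lemma cpos_mult: "(0::complex) < x \<Longrightarrow> 0 < y \<Longrightarrow> 0 < x * y"
  by (auto simp: less_complex_def less_eq_complex_def)

lemma cnn_nat: "(0::complex) \<le> of_nat n"
  by (simp add: less_eq_complex_def)

lemma cnn_one[simp]: "(0::complex) \<le> 1"
  by (simp add: less_eq_complex_def)

lemma cpos_one[simp]: "(0::complex) < 1"
  by (simp add: less_complex_def)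

lemma Omega_at: "Omega G (i,j,m,l) =
   of_nat (Suc i) * of_nat (Suc l) * G (Suc i, j, m, Suc l)
   - of_nat (Suc j) * of_nat (Suc m) * G (i, Suc j, Suc m, l)"
  by (simp add: Omega_def dx0_def dx1_def dy0_def dy1_def)

lemma Omega_pow_props:
  assumes H1: "\<And>i j m l. 0 \<le> (-1)^j * F (i,j,m,l)"
      and H2: "\<And>i j m l. odd (i+j) \<Longrightarrow> F (i,j,m,l) = 0"
  shows "(odd (i+j+k) \<longrightarrow> (Omega^^k) F (i,j,m,l) = 0) \<and>
         0 \<le> (-1)^j * (Omega^^k) F (i,j,m,l) \<and>
         (0 < (-1)^j * F (i+k,j,m,l+k) \<longrightarrow> 0 < (-1)^j * (Omega^^k) F (i,j,m,l))"
proof (induction k arbitrary: i j m l)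
  case 0
  then show ?case using H1 H2 by simp
next
  case (Suc k)
  define G where "G = (Omega^^k) F"
  have e: "(Omega^^Suc k) F (i,j,m,l) =
   of_nat (Suc i) * of_nat (Suc l) * G (Suc i, j, m, Suc l)
   - of_nat (Suc j) * of_nat (Suc m) * G (i, Suc j, Suc m, l)"
    by (simp add: G_def Omega_at)
  have e2: "(-1)^j * (Omega^^Suc k) F (i,j,m,l) =
     of_nat (Suc i) * of_nat (Suc l) * ((-1)^j * G (Suc i, j, m, Suc l))
   + of_nat (Suc j) * of_nat (Suc m) * ((-1)^(Suc j) * G (i, Suc j, Suc m, l))"
    unfolding e by (simp add: algebra_simps)
  note A = Suc.IH[of "Suc i" j m "Suc l", folded G_def]
  note B = Suc.IH[of i "Suc j" "Suc m" l, folded G_def]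
  have nA: "0 \<le> of_nat (Suc i) * of_nat (Suc l) * ((-1)^j * G (Suc i, j, m, Suc l))"
    using mult_nonneg_nonneg[OF mult_nonneg_nonneg[OF cnn_nat cnn_nat] conjunct1[OF conjunct2[OF A]]] .
  have nB: "0 \<le> of_nat (Suc j) * of_nat (Suc m) * ((-1)^(Suc j) * G (i, Suc j, Suc m, l))"
    using mult_nonneg_nonneg[OF mult_nonneg_nonneg[OF cnn_nat cnn_nat] conjunct1[OF conjunct2[OF B]]] .
  have c1: "odd (i+j+Suc k) \<longrightarrow> (Omega^^Suc k) F (i,j,m,l) = 0"
    using A B unfolding e by auto
  have c3: "0 < (-1)^j * F (i+Suc k,j,m,l+Suc k) \<longrightarrow> 0 < (-1)^j * (Omega^^Suc k) F (i,j,m,l)"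
  proof
    assume "0 < (-1)^j * F (i+Suc k,j,m,l+Suc k)"
    then have "0 < (-1)^j * G (Suc i, j, m, Suc l)" using A by simp
    then have "0 < of_nat (Suc i) * (of_nat (Suc l) * ((-1)^j * G (Suc i, j, m, Suc l)))"
      by (intro cpos_mult_nat)
    then show "0 < (-1)^j * (Omega^^Suc k) F (i,j,m,l)" unfolding e2
      using nB by (intro cpos_add) (simp_all add: mult.assoc)
  qed
  show ?case using c1 c3 nA nB e2 by simp
qed

definition qq :: "nat \<Rightarrow> poly2" where "qq e = p2_pow (quad_form 1 0 1) e"

lemma quad_props: "0 \<le> quad_form 1 0 1 (a,b)" "quad_form 1 0 1 (a,b) \<noteq> 0 \<Longrightarrow> even a \<and> even b"
  by (auto simp: quad_form_def split: if_splits)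

lemma qq_props: "0 \<le> qq e (a,b) \<and> (qq e (a,b) \<noteq> 0 \<longrightarrow> even a \<and> even b)"
proof (induction e arbitrary: a b)
  case 0
  then show ?case by (auto simp: qq_def p2_one_def)
next
  case (Suc e)
  have eq: "qq (Suc e) (a,b) = (\<Sum>i1\<le>a. \<Sum>j1\<le>b. quad_form 1 0 1 (i1,j1) * qq e (a - i1, b - j1))"
    by (simp add: qq_def p2_mult_def)
  have "0 \<le> qq (Suc e) (a,b)" unfolding eq
    using Suc.IH quad_props by (intro sum_nonneg mult_nonneg_nonneg) auto
  moreover have "qq (Suc e) (a,b) \<noteq> 0 \<longrightarrow> even a \<and> even b"
  proof
    assume "qq (Suc e) (a,b) \<noteq> 0"
    then obtain i1 j1 where ij: "i1 \<le> a" "j1 \<le> b" "quad_form 1 0 1 (i1,j1) * qq e (a - i1, b - j1) \<noteq> 0"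
      unfolding eq by (meson atMost_iff sum.neutral)
    then have nz: "quad_form 1 0 1 (i1,j1) \<noteq> 0" "qq e (a - i1, b - j1) \<noteq> 0" by auto
    have "even i1 \<and> even j1" using quad_props(2)[OF nz(1)] .
    moreover have "even (a-i1) \<and> even (b-j1)" using Suc.IH[of "a-i1" "b-j1"] nz(2) by blast
    ultimately have "even i1 \<and> even j1" "even (a-i1) \<and> even (b-j1)" by auto
    then show "even a \<and> even b" using ij(1,2) by (metis dvd_add le_add_diff_inverse)
  qed
  ultimately show ?case by blast
qed

lemma qq_pos: "p \<le> e \<Longrightarrow> 0 < qq e (2*p, 2*e - 2*p)"
proof (induction e arbitrary: p)
  case 0
  then show ?case by (simp add: qq_def p2_one_def)
next
  case (Suc e)
  have eq: "qq (Suc e) (2*p, 2*Suc e - 2*p) = (\<Sum>i1\<le>2*p. \<Sum>j1\<le>2*Suc e - 2*p. quad_form 1 0 1 (i1,j1) * qq e (2*p - i1, 2*Suc e - 2*p - j1))"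
    by (simp add: qq_def p2_mult_def)
  have nn: "\<And>i1 j1. 0 \<le> quad_form 1 0 1 (i1,j1) * qq e (2*p - i1, 2*Suc e - 2*p - j1)"
    using qq_props quad_props by (intro mult_nonneg_nonneg) auto
  have key: "\<exists>i1\<le>2*p. \<exists>j1\<le>2*Suc e - 2*p. 0 < quad_form 1 0 1 (i1,j1) * qq e (2*p - i1, 2*Suc e - 2*p - j1)"
  proof (cases p)
    case 0
    have "0 < qq e (2*0, 2*e - 2*0)" using Suc.IH[of 0] by simp
    then show ?thesis using 0 by (intro exI[of _ 0] exI[of _ 2]) (auto simp: quad_form_def)
  next
    case (Suc p')
    have "0 < qq e (2*p', 2*e - 2*p')" using Suc.IH Suc.prems Suc by simp
    moreover have "2*Suc e - 2*p - 0 = 2*e - 2*p'" "2*p - 2 = 2*p'" using Suc by auto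
    ultimately show ?thesis using Suc by (intro exI[of _ 2] exI[of _ 0]) (auto simp: quad_form_def)
  qed
  then obtain i1 j1 where ij: "i1 \<le> 2*p" "j1 \<le> 2*Suc e - 2*p"
    "0 < quad_form 1 0 1 (i1,j1) * qq e (2*p - i1, 2*Suc e - 2*p - j1)" by blast
  have "quad_form 1 0 1 (i1,j1) * qq e (2*p - i1, 2*Suc e - 2*p - j1)
      \<le> (\<Sum>j1\<le>2*Suc e - 2*p. quad_form 1 0 1 (i1,j1) * qq e (2*p - i1, 2*Suc e - 2*p - j1))"
    using ij nn by (intro member_le_sum) auto
  also have "\<dots> \<le> (\<Sum>i1\<le>2*p. \<Sum>j1\<le>2*Suc e - 2*p. quad_form 1 0 1 (i1,j1) * qq e (2*p - i1, 2*Suc e - 2*p - j1))"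
    using ij nn by (intro member_le_sum sum_nonneg) auto
  finally show ?case unfolding eq using ij(3) by simp
qed

theorem mainTheorem8:
  fixes e p :: nat
  assumes "e \<ge> 1" and "p \<le> e"
  shows "\<exists>a b c :: complex.
           transvectant (2*e) (2*e) (p2_pow (quad_form a b c) e) (p2_pow (quad_form a b c) e) (2*p)
             \<noteq> (\<lambda>_. 0)"
proof (intro exI)
  define F where "F = tensor (qq e) (qq e)"
  have Fat: "F (i,j,m,l) = qq e (i,j) * qq e (m,l)" for i j m l
    by (simp add: F_def tensor_def)
  have H1: "0 \<le> (-1)^j * F (i,j,m,l)" for i j m l
  proof (cases "even j")
    case True then show ?thesis using qq_props by (simp add: Fat mult_nonneg_nonneg)
  next
    case False then show ?thesis using qq_props[of e i j] by (auto simp: Fat)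
  qed
  have H2: "odd (i+j) \<Longrightarrow> F (i,j,m,l) = 0" for i j m l
    using qq_props[of e i j] by (auto simp: Fat)
  note P = Omega_pow_props[OF H1 H2]
  define N where "N = 4*e - 4*p"
  define G where "G = (Omega^^(2*p)) F"
  have diag_eq: "diag G (0,N) = (\<Sum>j1\<le>N. G (0,j1,0,N-j1))"
    by (simp add: diag_def)
  have nn: "0 \<le> G (0,j1,0,N-j1)" for j1
  proof (cases "even j1")
    case True then show ?thesis using P[of 0 j1 "2*p" 0 "N-j1"] by (simp add: G_def)
  next
    case False then show ?thesis using P[of 0 j1 "2*p" 0 "N-j1"] by (simp add: G_def)
  qed
  define j0 where "j0 = 2*e - 2*p"
  have j0N: "j0 \<le> N" using assms by (simp add: j0_def N_def)
  have "0 < (-1::complex)^j0 * F (0+2*p, j0, 0, N - j0 + 2*p)"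
  proof -
    have "N - j0 + 2*p = 2*e - 2*0" using assms by (simp add: j0_def N_def)
    moreover have "0 < qq e (2*p, j0)" using qq_pos[OF assms(2)] by (simp add: j0_def)
    moreover have "0 < qq e (2*0, 2*e - 2*0)" using qq_pos[of 0 e] by simp
    moreover have "even j0" by (simp add: j0_def)
    ultimately show ?thesis by (simp add: Fat cpos_mult)
  qed
  then have "0 < (-1::complex)^j0 * G (0,j0,0,N-j0)" using P[of 0 j0 "2*p" 0 "N-j0"] by (simp add: G_def)
  then have pos0: "0 < G (0,j0,0,N-j0)" by (simp add: j0_def)
  have "G (0,j0,0,N-j0) \<le> diag G (0,N)" unfolding diag_eq
    using j0N nn by (intro member_le_sum) auto
  then have dpos: "0 < diag G (0,N)" using pos0 by simp
  define r :: real where "r = fact (2*e - 2*p) * fact (2*e - 2*p) / (fact (2*e) * fact (2*e))"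
  have rpos: "0 < r" by (simp add: r_def)
  have "transvectant (2*e) (2*e) (qq e) (qq e) (2*p) (0,N) = complex_of_real r * diag G (0,N)"
    by (simp add: transvectant_def r_def G_def F_def)
  also have "\<dots> \<noteq> 0" using cpos_mult_real[OF dpos rpos] by auto
  finally show "transvectant (2*e) (2*e) (p2_pow (quad_form 1 0 1) e) (p2_pow (quad_form 1 0 1) e) (2*p) \<noteq> (\<lambda>_. 0)"
    unfolding qq_def by (metis)
qed

end
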